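(* Let $H\in(0,1)$, let $B^H$ be a fractional Brownian motion on $[0,1]$ with Hurst index $H$, fix $\delta\in(0,H)$ and $\rho>0$, and define $$N=\sup\Bigl\{n\ge1:\ \|B^H_n-B^H_{n-1}\|_\infty\ge \rho\cdot 2^{-(H-\delta)n}\Bigr\}.$$ Then for every $t>0$, $\mathbb{E}[\exp\{tN\}]<\infty$. Moreover, for every $n>N$, $$\|B^H-B^H_n\|_\infty\le \frac{\rho\cdot 2^{-(H-\delta)(n+1)}}{1-2^{-(H-\delta)}}.$$
   Context: A fractional Brownian motion with Hurst index $H$ is a centered Gaussian process with $B^H(0)=0$ and covariance $\mathbb{E}[B^H(s)B^H(t)]=\tfrac12(|s|^{2H}+|t|^{2H}-|s-t|^{2H})$, taken with continuous sample paths. For $n\ge0$, $B^H_n$ is the function on $[0,1]$ obtained by linear interpolation of the values of $B^H$ at the dyadic points $i/2^n$, $i=0,\dots,2^n$; $B^H_{-1}\equiv0$. $\|u\|_\infty=\sup_{t\in[0,1]}|u(t)|$. (In the paper $\rho$ arises as $2(\nu+\nu^* )$ for arbitrary $\nu,\nu^*>0$, i.e. $\rho$ is an arbitrary positive constant.) *)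

theory Defs
  imports "HOL-Probability.Probability"
begin

definition real_gaussian :: "'a measure \<Rightarrow> ('a \<Rightarrow> real) \<Rightarrow> bool" where
  "real_gaussian M X \<longleftrightarrow>
     X \<in> borel_measurable M \<and>
     ((\<exists>\<mu> \<sigma>. \<sigma> > 0 \<and> distributed M lborel X (normal_density \<mu> \<sigma>)) \<or>
      (\<exists>c. AE \<omega> in M. X \<omega> = c))"

definition fBm :: "'a measure \<Rightarrow> real \<Rightarrow> (real \<Rightarrow> 'a \<Rightarrow> real) \<Rightarrow> bool" where
  "fBm M H B \<longleftrightarrow>
     prob_space M \<and>
     (\<forall>t\<in>{0..1}. B t \<in> borel_measurable M) \<and>
     (\<forall>\<omega>\<in>space M. B 0 \<omega> = 0) \<and>
     (\<forall>\<omega>\<in>space M. continuous_on {0..1} (\<lambda>t. B t \<omega>)) \<and>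
     (\<forall>(ts::real list) (cs::real list). length cs = length ts \<longrightarrow> set ts \<subseteq> {0..1} \<longrightarrow>
        real_gaussian M (\<lambda>\<omega>. \<Sum>i<length ts. cs ! i * B (ts ! i) \<omega>)) \<and>
     (\<forall>t\<in>{0..1}. integral\<^sup>L M (B t) = 0) \<and>
     (\<forall>s\<in>{0..1}. \<forall>t\<in>{0..1}.
        integral\<^sup>L M (\<lambda>\<omega>. B s \<omega> * B t \<omega>) =
          (\<bar>s\<bar> powr (2*H) + \<bar>t\<bar> powr (2*H) - \<bar>s - t\<bar> powr (2*H)) / 2)"

definition dyadic_interp :: "nat \<Rightarrow> (real \<Rightarrow> real) \<Rightarrow> real \<Rightarrow> real" where
  "dyadic_interp n f t =
     (let i = min (nat \<lfloor>t * 2 ^ n\<rfloor>) (2 ^ n - 1);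
          l = t * 2 ^ n - real i
      in (1 - l) * f (real i / 2 ^ n) + l * f (real (i + 1) / 2 ^ n))"

definition supnorm01 :: "(real \<Rightarrow> real) \<Rightarrow> real" where
  "supnorm01 u = (SUP t\<in>{0..1}. \<bar>u t\<bar>)"

text \<open>The random index N (sup in the extended naturals; Sup of the empty set is 0).\<close>
definition fbm_N :: "(real \<Rightarrow> 'a \<Rightarrow> real) \<Rightarrow> real \<Rightarrow> real \<Rightarrow> real \<Rightarrow> 'a \<Rightarrow> enat" where
  "fbm_N B H \<delta> \<rho> \<omega> =
     Sup (enat ` {n. n \<ge> 1 \<and>
        supnorm01 (\<lambda>t. dyadic_interp n (\<lambda>s. B s \<omega>) t - dyadic_interp (n - 1) (\<lambda>s. B s \<omega>) t)
          \<ge> \<rho> * 2 powr (- (H - \<delta>) * real n)})"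

definition exp_enat :: "real \<Rightarrow> enat \<Rightarrow> ennreal" where
  "exp_enat t N = (case N of enat k \<Rightarrow> ennreal (exp (t * real k)) | \<infinity> \<Rightarrow> \<infinity>)"

end

theory Submission
  imports Defs
begin

definition idx :: "nat \<Rightarrow> real \<Rightarrow> nat" where
  "idx n t = min (nat \<lfloor>t * 2 ^ n\<rfloor>) (2 ^ n - 1)"
definition lam :: "nat \<Rightarrow> real \<Rightarrow> real" where
  "lam n t = t * 2 ^ n - real (idx n t)"

lemma interp_eq: "dyadic_interp n f t =
   (1 - lam n t) * f (real (idx n t) / 2 ^ n) + lam n t * f (real (idx n t + 1) / 2 ^ n)"
  by (simp add: dyadic_interp_def idx_def lam_def Let_def)

lemma idx_props:
  assumes "0 \<le> t" "t \<le> 1"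
  shows "idx n t < 2 ^ n \<and> 0 \<le> lam n t \<and> lam n t \<le> 1"
proof (cases "t < 1")
  case True
  define F where "F = \<lfloor>t * 2 ^ n\<rfloor>"
  have F0: "0 \<le> F" using assms by (simp add: F_def)
  have "t * 2 ^ n < 2 ^ n" using True by simp
  hence "F < 2 ^ n" unfolding F_def by (metis floor_less_iff of_int_numeral of_int_power)
  hence a: "nat F < 2 ^ n" using F0 by (simp add: nat_less_iff)
  have "nat F \<le> 2 ^ n - 1" using a by linarith
  hence i: "idx n t = nat F" by (simp add: idx_def F_def)
  have "real (nat F) = real_of_int F" using F0 by simp
  hence l: "lam n t = t * 2 ^ n - F" by (simp add: lam_def i)
  have "F \<le> t * 2 ^ n" "t * 2 ^ n < F + 1" unfolding F_def by linarith+
  thus ?thesis using l i \<open>nat F \<le> 2 ^ n - 1\<close>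
    using a by simp
next
  case False
  hence t: "t = 1" using assms by simp
  have "\<lfloor>(2::real) ^ n\<rfloor> = 2 ^ n" by (metis floor_of_int of_int_numeral of_int_power)
  hence i: "idx n t = 2 ^ n - 1" by (simp add: idx_def t nat_power_eq)
  have "real (2 ^ n - 1 :: nat) = 2 ^ n - 1" by (simp add: of_nat_diff)
  hence "lam n t = 1" using i by (simp add: lam_def t)
  thus ?thesis using i by simp
qed

definition delta :: "(real \<Rightarrow> real) \<Rightarrow> nat \<Rightarrow> nat \<Rightarrow> real" where
  "delta f k j = f (real (2*j+1) / 2 ^ Suc k) - (f (real j / 2 ^ k) + f (real (j+1) / 2 ^ k)) / 2"

lemma idx_half:
  assumes "0 \<le> t"
  shows "idx k t = idx (Suc k) t div 2"
proof -
  define F where "F = \<lfloor>t * 2 ^ Suc k\<rfloor>"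
  have F0: "0 \<le> F" using assms by (simp add: F_def)
  have "t * 2 ^ k = (t * 2 ^ Suc k) / real_of_int 2" by simp
  hence "\<lfloor>t * 2 ^ k\<rfloor> = F div 2" unfolding F_def
    by (metis floor_divide_real_eq_div zero_le_numeral)
  hence "nat \<lfloor>t * 2 ^ k\<rfloor> = nat F div 2" using F0 by (simp add: nat_div_distrib)
  hence e1: "idx k t = min (nat F div 2) (2 ^ k - 1)" by (simp add: idx_def)
  have e2: "idx (Suc k) t = min (nat F) (2 * 2 ^ k - 1)" by (simp add: idx_def F_def)
  have P: "(1::nat) \<le> 2 ^ k" by simp
  have "\<And>x P::nat. 1 \<le> P \<Longrightarrow> min (x div 2) (P - 1) = min x (2 * P - 1) div 2"
    unfolding min_def by presburger
  thus ?thesis unfolding e1 e2 using P by blast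
qed

lemma lam_half:
  assumes "0 \<le> t"
  shows "lam k t = (lam (Suc k) t + real (idx (Suc k) t mod 2)) / 2"
proof -
  define i where "i = idx (Suc k) t"
  have "i = 2 * (i div 2) + i mod 2" by simp
  hence "real i = 2 * real (i div 2) + real (i mod 2)" by (metis of_nat_add of_nat_mult of_nat_numeral)
  thus ?thesis using idx_half[OF assms, of k] unfolding lam_def i_def[symmetric]
    by (simp add: field_simps)
qed

lemma Y_bound:
  assumes "0 \<le> t" "t \<le> 1"
  shows "\<exists>j<2^k. \<bar>dyadic_interp (Suc k) f t - dyadic_interp k f t\<bar> \<le> \<bar>delta f k j\<bar>"
proof -
  define i where "i = idx (Suc k) t"
  define l where "l = lam (Suc k) t"
  define j where "j = i div 2"
  have ip: "i < 2 ^ Suc k" "0 \<le> l" "l \<le> 1" using idx_props[OF assms, of "Suc k"] by (auto simp: i_def l_def)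
  have jlt: "j < 2 ^ k" using ip(1) by (simp add: j_def)
  have ij: "idx k t = j" using idx_half[OF assms(1), of k] by (simp add: j_def i_def)
  have lk: "lam k t = (l + real (i mod 2)) / 2" using lam_half[OF assms(1), of k] by (simp add: l_def i_def)
  have I1: "dyadic_interp (Suc k) f t = (1 - l) * f (real i / 2 ^ Suc k) + l * f (real (i + 1) / 2 ^ Suc k)"
    by (simp add: interp_eq i_def l_def)
  have I0: "dyadic_interp k f t = (1 - lam k t) * f (real j / 2 ^ k) + lam k t * f (real (j + 1) / 2 ^ k)"
    by (simp add: interp_eq ij)
  show ?thesis
  proof (cases "i mod 2 = 0")
    case True
    hence ie: "i = 2 * j" unfolding j_def by presburger
    have a1: "real i / 2 ^ Suc k = real j / 2 ^ k" by (simp add: ie)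
    have a2: "real (i + 1) / 2 ^ Suc k = real (2*j+1) / 2 ^ Suc k" by (simp add: ie)
    have "dyadic_interp (Suc k) f t - dyadic_interp k f t = l * delta f k j"
      unfolding I1 I0 a1 a2 lk True delta_def by (simp add: algebra_simps)
    hence "\<bar>dyadic_interp (Suc k) f t - dyadic_interp k f t\<bar> \<le> \<bar>delta f k j\<bar>"
      using ip by (simp add: abs_mult mult_left_le_one_le)
    thus ?thesis using jlt by blast
  next
    case False
    hence m1: "i mod 2 = 1" by simp
    hence ie: "i = 2 * j + 1" unfolding j_def by presburger
    have a1: "real i / 2 ^ Suc k = real (2*j+1) / 2 ^ Suc k" by (simp add: ie)
    have a2: "real (i + 1) / 2 ^ Suc k = real (j+1) / 2 ^ k" by (simp add: ie field_simps)
    have "dyadic_interp (Suc k) f t - dyadic_interp k f t = (1 - l) * delta f k j"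
      unfolding I1 I0 a1 a2 lk m1 delta_def by (simp add: field_simps)
    hence "\<bar>dyadic_interp (Suc k) f t - dyadic_interp k f t\<bar> \<le> \<bar>delta f k j\<bar>"
      using ip by (simp add: abs_mult mult_left_le_one_le)
    thus ?thesis using jlt by blast
  qed
qed


lemma interp_conv:
  assumes f: "continuous_on {0..1} f" and t: "0 \<le> t" "t \<le> 1"
  shows "(\<lambda>n. dyadic_interp n f t) \<longlonglongrightarrow> f t"
proof -
  define a where "a n = real (idx n t) / 2 ^ n" for n
  define b where "b n = real (idx n t + 1) / 2 ^ n" for n
  have ab: "a n \<in> {0..1} \<and> b n \<in> {0..1} \<and> t - (1/2)^n \<le> a n \<and> a n \<le> t \<and> t \<le> b n \<and> b n \<le> t + (1/2)^n" for n
  proof -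
    have p: "idx n t < 2 ^ n" "0 \<le> lam n t" "lam n t \<le> 1" using idx_props[OF t] by auto
    have "real (idx n t) + 1 \<le> 2 ^ n" using p(1)
      by (metis Suc_leI of_nat_Suc of_nat_le_iff of_nat_numeral of_nat_power add.commute)
    hence b1: "b n \<le> 1" by (simp add: b_def)
    have tl: "t = (real (idx n t) + lam n t) / 2 ^ n" by (simp add: lam_def)
    have "a n = t - lam n t / 2 ^ n" unfolding a_def by (subst tl) (simp add: field_simps)
    moreover have "b n = t + (1 - lam n t) / 2 ^ n" unfolding b_def by (subst tl) (simp add: field_simps)
    moreover have "lam n t / 2 ^ n \<le> (1/2)^n" "(1 - lam n t) / 2 ^ n \<le> (1/2)^n"
      using p by (simp_all add: power_one_over divide_right_mono)
    moreover have "0 \<le> a n" by (simp add: a_def)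
    moreover have "0 \<le> lam n t / 2 ^ n" "0 \<le> (1 - lam n t) / 2 ^ n" using p by simp_all
    ultimately show ?thesis using b1 t by auto
  qed
  have z: "(\<lambda>n. (1/2::real)^n) \<longlonglongrightarrow> 0" by (rule LIMSEQ_power_zero) simp
  have at: "a \<longlonglongrightarrow> t"
    by (rule tendsto_sandwich[of "\<lambda>n. t - (1/2)^n" _ _ "\<lambda>n. t"])
       (use ab z in \<open>auto intro!: tendsto_eq_intros\<close>)
  have bt: "b \<longlonglongrightarrow> t"
    by (rule tendsto_sandwich[of "\<lambda>n. t" _ _ "\<lambda>n. t + (1/2)^n"])
       (use ab z in \<open>auto intro!: tendsto_eq_intros\<close>)
  have fa: "(\<lambda>n. f (a n)) \<longlonglongrightarrow> f t"
    by (rule continuous_on_tendsto_compose[OF f at]) (use ab t in auto)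
  have fb: "(\<lambda>n. f (b n)) \<longlonglongrightarrow> f t"
    by (rule continuous_on_tendsto_compose[OF f bt]) (use ab t in auto)
  have g0: "(\<lambda>n. \<bar>f (a n) - f t\<bar> + \<bar>f (b n) - f t\<bar>) \<longlonglongrightarrow> 0"
    using tendsto_add[OF tendsto_rabs_zero[OF LIM_zero[OF fa]] tendsto_rabs_zero[OF LIM_zero[OF fb]]] by simp
  have "(\<lambda>n. dyadic_interp n f t - f t) \<longlonglongrightarrow> 0"
  proof (rule Lim_null_comparison[OF _ g0])
    show "\<forall>\<^sub>F n in sequentially. norm (dyadic_interp n f t - f t) \<le> \<bar>f (a n) - f t\<bar> + \<bar>f (b n) - f t\<bar>"
    proof (intro always_eventually allI)
      fix n
      have p: "0 \<le> lam n t" "lam n t \<le> 1" using idx_props[OF t] by auto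
      have "dyadic_interp n f t - f t = (1 - lam n t) * (f (a n) - f t) + lam n t * (f (b n) - f t)"
        by (simp add: interp_eq a_def b_def algebra_simps)
      also have "\<bar>\<dots>\<bar> \<le> (1 - lam n t) * \<bar>f (a n) - f t\<bar> + lam n t * \<bar>f (b n) - f t\<bar>"
        using p by (simp add: abs_mult abs_triangle_ineq[THEN order_trans])
      also have "\<dots> \<le> \<bar>f (a n) - f t\<bar> + \<bar>f (b n) - f t\<bar>"
        using p by (intro add_mono mult_left_le_one_le) auto
      finally show "norm (dyadic_interp n f t - f t) \<le> \<bar>f (a n) - f t\<bar> + \<bar>f (b n) - f t\<bar>" by simp
    qed
  qed
  thus ?thesis by (simp add: LIM_zero_iff)
qed


lemma Y_le_D:
  assumes "0 \<le> t" "t \<le> 1"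
  shows "\<bar>dyadic_interp (Suc k) f t - dyadic_interp k f t\<bar> \<le> Max ((\<lambda>j. \<bar>delta f k j\<bar>) ` {..<2^k})"
proof -
  obtain j where j: "j < 2^k" "\<bar>dyadic_interp (Suc k) f t - dyadic_interp k f t\<bar> \<le> \<bar>delta f k j\<bar>"
    using Y_bound[OF assms] by blast
  have "\<bar>delta f k j\<bar> \<le> Max ((\<lambda>j. \<bar>delta f k j\<bar>) ` {..<2^k})"
    using j(1) by (intro Max_ge) auto
  thus ?thesis using j(2) by linarith
qed

lemma Y_le_sup:
  assumes "0 \<le> t" "t \<le> 1"
  shows "\<bar>dyadic_interp (Suc k) f t - dyadic_interp k f t\<bar>
     \<le> supnorm01 (\<lambda>t. dyadic_interp (Suc k) f t - dyadic_interp (Suc k - 1) f t)"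
proof -
  have "bdd_above ((\<lambda>t. \<bar>dyadic_interp (Suc k) f t - dyadic_interp k f t\<bar>) ` {0..1})"
    using Y_le_D by (intro bdd_aboveI2) auto
  thus ?thesis unfolding supnorm01_def diff_Suc_1 using assms by (intro cSUP_upper) auto
qed

lemma pow_q: "(2::real) powr (- a * real m) = (2 powr (- a)) ^ m"
  by (subst powr_power) (simp_all add: mult_ac)

lemma part2:
  assumes f: "continuous_on {0..1} f" and a: "0 < a" and r: "0 < r"
    and hyp: "\<And>m. m > n \<Longrightarrow> supnorm01 (\<lambda>t. dyadic_interp m f t - dyadic_interp (m - 1) f t)
       < r * 2 powr (- a * real m)"
  shows "supnorm01 (\<lambda>t. f t - dyadic_interp n f t) \<le> r * 2 powr (- a * real (n + 1)) / (1 - 2 powr (- a))"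
proof -
  define q where "q = (2::real) powr (- a)"
  have q: "0 < q" "q < 1" using a by (auto simp: q_def powr_less_one)
  define G where "G = r * q ^ (n+1) / (1 - q)"
  have G: "r * 2 powr (- a * real (n + 1)) / (1 - 2 powr (- a)) = G"
    unfolding G_def q_def pow_q ..
  have pt: "\<bar>f t - dyadic_interp n f t\<bar> \<le> G" if t: "0 \<le> t" "t \<le> 1" for t
  proof -
    have ind: "\<bar>dyadic_interp (n + K) f t - dyadic_interp n f t\<bar> \<le> (\<Sum>i<K. r * q ^ (n + 1 + i))" for K
    proof (induction K)
      case 0 thus ?case by simp
    next
      case (Suc K)
      have "\<bar>dyadic_interp (Suc (n + K)) f t - dyadic_interp (n + K) f t\<bar>
          \<le> supnorm01 (\<lambda>t. dyadic_interp (Suc (n + K)) f t - dyadic_interp (Suc (n + K) - 1) f t)"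
        by (rule Y_le_sup[OF t])
      also have "\<dots> < r * 2 powr (- a * real (Suc (n + K)))" by (rule hyp) simp
      also have "\<dots> = r * q ^ (n + 1 + K)" unfolding pow_q q_def
        by (rule arg_cong[where f="\<lambda>m. r * (2 powr - a) ^ m"]) simp
      finally show ?case using Suc.IH by simp
    qed
    have sum: "(\<Sum>i<K. r * q ^ (n + 1 + i)) \<le> G" for K
    proof -
      have e1: "(\<Sum>i<K. r * q ^ (n + 1 + i)) = r * q ^ (n+1) * (\<Sum>i<K. q ^ i)"
        by (simp add: sum_distrib_left power_add mult.assoc)
      have "(\<Sum>i<K. q ^ i) = (1 - q ^ K) / (1 - q)" using q by (simp add: sum_gp_strict)
      also have "\<dots> \<le> 1 / (1 - q)" using q by (intro divide_right_mono) auto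
      finally have e2: "(\<Sum>i<K. q ^ i) \<le> 1 / (1 - q)" .
      have "r * q ^ (n+1) * (\<Sum>i<K. q ^ i) \<le> r * q ^ (n+1) * (1 / (1 - q))"
        by (rule mult_left_mono[OF e2]) (use q r in simp)
      thus ?thesis using e1 unfolding G_def by simp
    qed
    have lim: "(\<lambda>K. \<bar>dyadic_interp (K + n) f t - dyadic_interp n f t\<bar>) \<longlonglongrightarrow> \<bar>f t - dyadic_interp n f t\<bar>"
      by (intro tendsto_intros LIMSEQ_ignore_initial_segment interp_conv f t)
    have bnd: "\<bar>dyadic_interp (K + n) f t - dyadic_interp n f t\<bar> \<le> G" for K
      using order_trans[OF ind[of K] sum[of K]] by (simp add: add.commute)
    show ?thesis
      by (rule tendsto_upperbound[OF lim]) (use bnd in \<open>auto intro!: always_eventually\<close>)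
  qed
  show ?thesis unfolding G supnorm01_def
    by (rule cSUP_least) (use pt in auto)
qed


lemma gauss_int:
  assumes P: "prob_space M" and G: "real_gaussian M X"
  shows "integrable M X \<and> integrable M (\<lambda>\<omega>. X \<omega> ^ 2)"
proof -
  interpret prob_space M by (rule P)
  have Xm: "X \<in> borel_measurable M" using G by (simp add: real_gaussian_def)
  from G consider (n) \<mu> \<sigma> where "\<sigma> > 0" "distributed M lborel X (normal_density \<mu> \<sigma>)"
    | (c) c where "AE \<omega> in M. X \<omega> = c"
    unfolding real_gaussian_def by blast
  thus ?thesis
  proof cases
    case n
    have i1: "integrable M X"
      using distributed_integrable[OF n(2), of "\<lambda>x. x"] integrable_normal_moment_nz_1[OF n(1), where \<mu>=\<mu>] by simp
    have i2: "integrable M (\<lambda>\<omega>. (X \<omega> - \<mu>) ^ 2)"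
      using distributed_integrable[OF n(2), of "\<lambda>x. (x - \<mu>) ^ 2"] integrable_normal_moment[OF n(1), where \<mu>=\<mu> and k=2] by simp
    have "integrable M (\<lambda>\<omega>. (X \<omega> - \<mu>) ^ 2 + 2 * \<mu> * X \<omega> - \<mu> ^ 2)"
      using i1 i2 by (intro Bochner_Integration.integrable_diff Bochner_Integration.integrable_add
          integrable_mult_right integrable_const) auto
    moreover have "(\<lambda>\<omega>. (X \<omega> - \<mu>) ^ 2 + 2 * \<mu> * X \<omega> - \<mu> ^ 2) = (\<lambda>\<omega>. X \<omega> ^ 2)"
      by (auto simp: power2_eq_square algebra_simps)
    ultimately show ?thesis using i1 by simp
  next
    case c
    have "integrable M X = integrable M (\<lambda>_. c)"
      by (rule integrable_cong_AE) (use Xm c in auto)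
    moreover have "integrable M (\<lambda>\<omega>. X \<omega> ^ 2) = integrable M (\<lambda>_. c ^ 2)"
      by (rule integrable_cong_AE) (use Xm c in auto)
    ultimately show ?thesis by simp
  qed
qed

lemma gauss_tail:
  assumes P: "prob_space M" and G: "real_gaussian M X" and E: "integral\<^sup>L M X = 0"
    and V: "integral\<^sup>L M (\<lambda>\<omega>. X \<omega> ^ 2) \<le> s2" and c: "0 < c"
  shows "emeasure M {\<omega>\<in>space M. c \<le> \<bar>X \<omega>\<bar>} \<le> ennreal (fact (2*p) / (2^p * fact p) * s2^p / c^(2*p))"
proof -
  interpret prob_space M by (rule P)
  have Xm[measurable]: "X \<in> borel_measurable M" using G by (simp add: real_gaussian_def)
  have mk: "emeasure M {\<omega>\<in>space M. c \<le> \<bar>X \<omega>\<bar>} \<le> (\<integral>\<^sup>+\<omega>. ennreal (X \<omega> ^ (2*p) / c ^ (2*p)) \<partial>M)"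
  proof -
    have "emeasure M {\<omega>\<in>space M. c \<le> \<bar>X \<omega>\<bar>} = (\<integral>\<^sup>+\<omega>. indicator {\<omega>\<in>space M. c \<le> \<bar>X \<omega>\<bar>} \<omega> \<partial>M)"
      by (rule nn_integral_indicator[symmetric]) measurable
    also have "\<dots> \<le> (\<integral>\<^sup>+\<omega>. ennreal (X \<omega> ^ (2*p) / c ^ (2*p)) \<partial>M)"
    proof (intro nn_integral_mono)
      fix \<omega> assume "\<omega> \<in> space M"
      show "indicator {\<omega>\<in>space M. c \<le> \<bar>X \<omega>\<bar>} \<omega> \<le> ennreal (X \<omega> ^ (2*p) / c ^ (2*p))"
      proof (cases "c \<le> \<bar>X \<omega>\<bar>")
        case True
        have "c ^ (2*p) \<le> \<bar>X \<omega>\<bar> ^ (2*p)" using True c by (intro power_mono) auto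
        also have "\<bar>X \<omega>\<bar> ^ (2*p) = X \<omega> ^ (2*p)" by (simp add: power_even_abs)
        finally have "1 \<le> X \<omega> ^ (2*p) / c ^ (2*p)" using c by simp
        thus ?thesis using True \<open>\<omega> \<in> space M\<close> by (simp add: indicator_def)
      next
        case False thus ?thesis by (simp add: indicator_def)
      qed
    qed
    finally show ?thesis .
  qed
  from G consider (n) \<mu> \<sigma> where "\<sigma> > 0" "distributed M lborel X (normal_density \<mu> \<sigma>)"
    | (cst) d where "AE \<omega> in M. X \<omega> = d"
    unfolding real_gaussian_def by blast
  thus ?thesis
  proof cases
    case n
    have \<mu>: "\<mu> = 0" using normal_distributed_expectation[OF n] E by simp
    have D: "distributed M lborel X (normal_density 0 \<sigma>)" using n(2) \<mu> by simp
    have "variance X = \<sigma>\<^sup>2" by (rule normal_distributed_variance[OF n(1) D])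
    hence s: "\<sigma>\<^sup>2 \<le> s2" using V E by simp
    have int: "integrable M (\<lambda>\<omega>. X \<omega> ^ (2*p))"
      using distributed_integrable[OF D, of "\<lambda>x. x ^ (2*p)"] integrable_normal_moment[OF n(1), where \<mu>=0 and k="2*p"] by simp
    have val: "integral\<^sup>L M (\<lambda>\<omega>. X \<omega> ^ (2*p)) = fact (2 * p) / ((2 / \<sigma>\<^sup>2)^p * fact p)"
      using distributed_integral[OF D, of "\<lambda>x. x ^ (2*p)"] integral_normal_moment_even[OF n(1), where \<mu>=0 and k=p] by simp
    have "(\<integral>\<^sup>+\<omega>. ennreal (X \<omega> ^ (2*p) / c ^ (2*p)) \<partial>M) = ennreal (integral\<^sup>L M (\<lambda>\<omega>. X \<omega> ^ (2*p) / c ^ (2*p)))"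
      by (rule nn_integral_eq_integral) (use int in \<open>auto simp: zero_le_even_power\<close>)
    also have "integral\<^sup>L M (\<lambda>\<omega>. X \<omega> ^ (2*p) / c ^ (2*p)) = fact (2 * p) / ((2 / \<sigma>\<^sup>2)^p * fact p) / c ^ (2*p)"
      using val by simp
    also have "\<dots> = fact (2*p) / (2^p * fact p) * (\<sigma>\<^sup>2)^p / c^(2*p)"
      using n(1) by (simp add: power_divide field_simps)
    also have "\<dots> \<le> fact (2*p) / (2^p * fact p) * s2^p / c^(2*p)"
      using s c by (intro divide_right_mono mult_left_mono power_mono) auto
    finally show ?thesis using mk by (meson ennreal_leI order_trans)
  next
    case cst
    have "d = 0"
    proof -
      have "integral\<^sup>L M X = integral\<^sup>L M (\<lambda>_. d)" by (rule integral_cong_AE) (use Xm cst in auto)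
      thus ?thesis using E by (simp add: prob_space)
    qed
    have "AE \<omega> in M. \<not> (c \<le> \<bar>X \<omega>\<bar>)" using cst \<open>d = 0\<close> c by auto
    hence "emeasure M {\<omega>\<in>space M. c \<le> \<bar>X \<omega>\<bar>} = 0"
      by (subst (asm) AE_iff_measurable[where N="{\<omega>\<in>space M. c \<le> \<bar>X \<omega>\<bar>}"]) auto
    thus ?thesis by simp
  qed
qed


lemma fBm_facts:
  assumes "fBm M H B"
  shows "prob_space M" "\<And>t. t \<in> {0..1} \<Longrightarrow> B t \<in> borel_measurable M"
    "\<And>\<omega>. \<omega> \<in> space M \<Longrightarrow> continuous_on {0..1} (\<lambda>t. B t \<omega>)"
    "\<And>ts cs. length cs = length ts \<Longrightarrow> set ts \<subseteq> {0..1} \<Longrightarrow>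
        real_gaussian M (\<lambda>\<omega>. \<Sum>i<length ts. cs ! i * B (ts ! i) \<omega>)"
    "\<And>t. t \<in> {0..1} \<Longrightarrow> integral\<^sup>L M (B t) = 0"
    "\<And>s t. s \<in> {0..1} \<Longrightarrow> t \<in> {0..1} \<Longrightarrow> integral\<^sup>L M (\<lambda>\<omega>. B s \<omega> * B t \<omega>) =
          (\<bar>s\<bar> powr (2*H) + \<bar>t\<bar> powr (2*H) - \<bar>s - t\<bar> powr (2*H)) / 2"
  using assms unfolding fBm_def by blast+

lemma B_int:
  assumes F: "fBm M H B" and u: "u \<in> {0..1}"
  shows "integrable M (B u) \<and> integrable M (\<lambda>\<omega>. B u \<omega> ^ 2)"
proof -
  have "real_gaussian M (\<lambda>\<omega>. \<Sum>i<length [u]. [1] ! i * B ([u] ! i) \<omega>)"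
    by (rule fBm_facts(4)[OF F]) (use u in auto)
  hence "real_gaussian M (B u)" by simp
  thus ?thesis using gauss_int[OF fBm_facts(1)[OF F]] by blast
qed

lemma prod_int:
  assumes F: "fBm M H B" and u: "u \<in> {0..1}" and v: "v \<in> {0..1}"
  shows "integrable M (\<lambda>\<omega>. B u \<omega> * B v \<omega>)"
proof (rule Bochner_Integration.integrable_bound)
  show "integrable M (\<lambda>\<omega>. B u \<omega> ^ 2 + B v \<omega> ^ 2)"
    using B_int[OF F u] B_int[OF F v] by auto
  show "(\<lambda>\<omega>. B u \<omega> * B v \<omega>) \<in> borel_measurable M"
    using fBm_facts(2)[OF F u] fBm_facts(2)[OF F v] by measurable
  show "AE \<omega> in M. norm (B u \<omega> * B v \<omega>) \<le> norm (B u \<omega> ^ 2 + B v \<omega> ^ 2)"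
  proof (intro AE_I2)
    fix \<omega>
    have "0 \<le> (\<bar>B u \<omega>\<bar> - \<bar>B v \<omega>\<bar>)^2" by simp
    also have "(\<bar>B u \<omega>\<bar> - \<bar>B v \<omega>\<bar>)^2 = B u \<omega> ^ 2 + B v \<omega> ^ 2 - 2 * (\<bar>B u \<omega>\<bar> * \<bar>B v \<omega>\<bar>)"
      by (simp add: power2_eq_square algebra_simps)
    finally have "2 * (\<bar>B u \<omega>\<bar> * \<bar>B v \<omega>\<bar>) \<le> B u \<omega> ^ 2 + B v \<omega> ^ 2" by simp
    moreover have "0 \<le> \<bar>B u \<omega>\<bar> * \<bar>B v \<omega>\<bar>" by simp
    ultimately have "\<bar>B u \<omega>\<bar> * \<bar>B v \<omega>\<bar> \<le> B u \<omega> ^ 2 + B v \<omega> ^ 2" by linarith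
    thus "norm (B u \<omega> * B v \<omega>) \<le> norm (B u \<omega> ^ 2 + B v \<omega> ^ 2)" by (simp add: abs_mult)
  qed
qed

lemma incr_L2:
  assumes F: "fBm M H B" and u: "u \<in> {0..1}" and v: "v \<in> {0..1}"
  shows "integrable M (\<lambda>\<omega>. (B u \<omega> - B v \<omega>) ^ 2) \<and>
         integral\<^sup>L M (\<lambda>\<omega>. (B u \<omega> - B v \<omega>) ^ 2) = \<bar>u - v\<bar> powr (2*H)"
proof -
  have e: "(\<lambda>\<omega>. (B u \<omega> - B v \<omega>) ^ 2) = (\<lambda>\<omega>. B u \<omega> * B u \<omega> - 2 * (B u \<omega> * B v \<omega>) + B v \<omega> * B v \<omega>)"
    by (auto simp: power2_eq_square algebra_simps)
  note i = prod_int[OF F u u] prod_int[OF F u v] prod_int[OF F v v]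
  have "integrable M (\<lambda>\<omega>. B u \<omega> * B u \<omega> - 2 * (B u \<omega> * B v \<omega>) + B v \<omega> * B v \<omega>)"
    using i by auto
  moreover have "integral\<^sup>L M (\<lambda>\<omega>. B u \<omega> * B u \<omega> - 2 * (B u \<omega> * B v \<omega>) + B v \<omega> * B v \<omega>)
     = integral\<^sup>L M (\<lambda>\<omega>. B u \<omega> * B u \<omega>) - 2 * integral\<^sup>L M (\<lambda>\<omega>. B u \<omega> * B v \<omega>) + integral\<^sup>L M (\<lambda>\<omega>. B v \<omega> * B v \<omega>)"
    using i by simp
  moreover have "\<dots> = \<bar>u - v\<bar> powr (2*H)"
    using fBm_facts(6)[OF F u u] fBm_facts(6)[OF F u v] fBm_facts(6)[OF F v v] by simp
  ultimately show ?thesis unfolding e by simp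
qed


lemma pts:
  assumes "j < (2::nat)^k"
  shows "real (2*j+1) / 2 ^ Suc k \<in> {0..1}" "real j / 2 ^ k \<in> {0..1}" "real (j+1) / 2 ^ k \<in> {0..1}"
proof -
  have a: "real j + 1 \<le> 2 ^ k" using assms
    by (metis Suc_leI of_nat_Suc of_nat_le_iff of_nat_numeral of_nat_power add.commute)
  have b: "real j \<le> 2 ^ k" using a by linarith
  show "real (2*j+1) / 2 ^ Suc k \<in> {0..1}" "real j / 2 ^ k \<in> {0..1}" "real (j+1) / 2 ^ k \<in> {0..1}"
    using a b by (auto simp: field_simps)
qed

lemma half_pow_powr: "(1 / 2 ^ m :: real) powr (2*H) = 2 powr (- (2 * H * real m))"
  by (simp add: powr_minus_divide powr_divide powr_powr powr_realpow[symmetric] mult.commute)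

lemma delta_gauss:
  assumes F: "fBm M H B" and j: "j < (2::nat)^k"
  shows "real_gaussian M (\<lambda>\<omega>. delta (\<lambda>s. B s \<omega>) k j)"
proof -
  define ts where "ts = [real (2*j+1) / 2 ^ Suc k, real j / 2 ^ k, real (j+1) / 2 ^ k]"
  define cs where "cs = [1, -1/2, -1/2 :: real]"
  have "real_gaussian M (\<lambda>\<omega>. \<Sum>i<length ts. cs ! i * B (ts ! i) \<omega>)"
    by (rule fBm_facts(4)[OF F]) (use pts[OF j] in \<open>auto simp: ts_def cs_def\<close>)
  moreover have "(\<lambda>\<omega>. \<Sum>i<length ts. cs ! i * B (ts ! i) \<omega>) = (\<lambda>\<omega>. delta (\<lambda>s. B s \<omega>) k j)"
    apply (rule ext)
    apply (simp add: ts_def cs_def delta_def lessThan_Suc eval_nat_numeral)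
    subgoal by (simp add: add_divide_distrib)
    done
  ultimately show ?thesis by simp
qed

lemma delta_meas:
  assumes F: "fBm M H B" and j: "j < (2::nat)^k"
  shows "(\<lambda>\<omega>. delta (\<lambda>s. B s \<omega>) k j) \<in> borel_measurable M"
  using delta_gauss[OF F j] by (simp add: real_gaussian_def)

lemma delta_mean:
  assumes F: "fBm M H B" and j: "j < (2::nat)^k"
  shows "integral\<^sup>L M (\<lambda>\<omega>. delta (\<lambda>s. B s \<omega>) k j) = 0"
proof -
  note p = pts[OF j]
  note i = B_int[OF F p(1)] B_int[OF F p(2)] B_int[OF F p(3)]
  have "integral\<^sup>L M (\<lambda>\<omega>. delta (\<lambda>s. B s \<omega>) k j) =
     integral\<^sup>L M (B (real (2*j+1) / 2 ^ Suc k)) - (integral\<^sup>L M (B (real j / 2 ^ k)) + integral\<^sup>L M (B (real (j+1) / 2 ^ k))) / 2"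
    unfolding delta_def using i by simp
  thus ?thesis using fBm_facts(5)[OF F p(1)] fBm_facts(5)[OF F p(2)] fBm_facts(5)[OF F p(3)] by simp
qed

lemma delta_var:
  assumes F: "fBm M H B" and j: "j < (2::nat)^k"
  shows "integral\<^sup>L M (\<lambda>\<omega>. (delta (\<lambda>s. B s \<omega>) k j) ^ 2) \<le> 2 powr (- (2 * H * real (Suc k)))"
proof -
  note p = pts[OF j]
  define x where "x = real (2*j+1) / 2 ^ Suc k"
  define a where "a = real j / 2 ^ k"
  define b where "b = real (j+1) / 2 ^ k"
  have d1: "\<bar>x - a\<bar> = 1 / 2 ^ Suc k" by (simp add: x_def a_def field_simps)
  have d2: "\<bar>x - b\<bar> = 1 / 2 ^ Suc k" by (simp add: x_def b_def field_simps)
  note U = incr_L2[OF F p(1) p(2), folded x_def a_def]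
  note V = incr_L2[OF F p(1) p(3), folded x_def b_def]
  have i2: "integrable M (\<lambda>\<omega>. (delta (\<lambda>s. B s \<omega>) k j) ^ 2)"
    using gauss_int[OF fBm_facts(1)[OF F] delta_gauss[OF F j]] by blast
  have "integral\<^sup>L M (\<lambda>\<omega>. (delta (\<lambda>s. B s \<omega>) k j) ^ 2)
      \<le> integral\<^sup>L M (\<lambda>\<omega>. (B x \<omega> - B a \<omega>) ^ 2 / 2 + (B x \<omega> - B b \<omega>) ^ 2 / 2)"
  proof (rule integral_mono)
    show "integrable M (\<lambda>\<omega>. (B x \<omega> - B a \<omega>) ^ 2 / 2 + (B x \<omega> - B b \<omega>) ^ 2 / 2)"
      using U V by auto
    fix \<omega>
    have d: "delta (\<lambda>s. B s \<omega>) k j = ((B x \<omega> - B a \<omega>) + (B x \<omega> - B b \<omega>)) / 2"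
      by (simp add: delta_def x_def a_def b_def field_simps)
    have idn: "(((p::real) + q) / 2) ^ 2 = p ^ 2 / 2 + q ^ 2 / 2 - (p - q)^2 / 4" for p q
      by (simp add: power2_eq_square field_simps)
    have nn: "0 \<le> ((B x \<omega> - B a \<omega>) - (B x \<omega> - B b \<omega>))^2 / 4" by simp
    show "(delta (\<lambda>s. B s \<omega>) k j) ^ 2 \<le> (B x \<omega> - B a \<omega>) ^ 2 / 2 + (B x \<omega> - B b \<omega>) ^ 2 / 2"
      unfolding d idn using nn by linarith
  qed (use i2 in auto)
  also have "\<dots> = (1 / 2 ^ Suc k) powr (2*H)"
    using U V d1 d2 by simp
  finally show ?thesis by (simp only: half_pow_powr)
qed


lemma ratio:
  assumes r: "0 < \<rho>"
  shows "(2 powr (- (2 * H * real m))) ^ p / (\<rho> * 2 powr (- (H - \<delta>) * real m)) ^ (2 * p)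
     = (2 powr (- (2 * \<delta> * real p))) ^ m / \<rho> ^ (2 * p)"
proof -
  have a: "(2 powr (- (2 * H * real m))) ^ p = 2 powr (real p * (- (2 * H * real m)))"
    by (simp add: powr_power)
  have b: "(\<rho> * 2 powr (- (H - \<delta>) * real m)) ^ (2 * p) = \<rho> ^ (2*p) * 2 powr (real (2*p) * (- (H - \<delta>) * real m))"
    by (simp add: power_mult_distrib powr_power)
  have c: "(2 powr (- (2 * \<delta> * real p))) ^ m = 2 powr (real m * (- (2 * \<delta> * real p)))"
    by (simp add: powr_power)
  have d: "real p * (- (2 * H * real m)) - real (2*p) * (- (H - \<delta>) * real m) = real m * (- (2 * \<delta> * real p))"
    by (simp add: algebra_simps)
  show ?thesis unfolding a b c d[symmetric] powr_diff using r by (simp add: field_simps)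
qed

lemma tail_A:
  assumes F: "fBm M H B" and j: "j < (2::nat)^k" and r: "0 < \<rho>"
  shows "emeasure M {\<omega>\<in>space M. \<rho> * 2 powr (- (H - \<delta>) * real (Suc k)) \<le> \<bar>delta (\<lambda>s. B s \<omega>) k j\<bar>}
     \<le> ennreal (fact (2*p) / (2^p * fact p) / \<rho> ^ (2 * p) * (2 powr (- (2 * \<delta> * real p))) ^ Suc k)"
proof -
  have "emeasure M {\<omega>\<in>space M. \<rho> * 2 powr (- (H - \<delta>) * real (Suc k)) \<le> \<bar>delta (\<lambda>s. B s \<omega>) k j\<bar>}
     \<le> ennreal (fact (2*p) / (2^p * fact p) * (2 powr (- (2 * H * real (Suc k)))) ^ p / (\<rho> * 2 powr (- (H - \<delta>) * real (Suc k))) ^ (2*p))"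
    by (rule gauss_tail[OF fBm_facts(1)[OF F] delta_gauss[OF F j] delta_mean[OF F j] delta_var[OF F j]])
       (use r in simp)
  also have "fact (2*p) / (2^p * fact p) * (2 powr (- (2 * H * real (Suc k)))) ^ p / (\<rho> * 2 powr (- (H - \<delta>) * real (Suc k))) ^ (2*p)
      = fact (2*p) / (2^p * fact p) / \<rho> ^ (2 * p) * (2 powr (- (2 * \<delta> * real p))) ^ Suc k"
    by (simp only: times_divide_eq_right[symmetric] ratio[OF r]) (simp add: field_simps)
  finally show ?thesis .
qed


definition Ev :: "'a measure \<Rightarrow> (real \<Rightarrow> 'a \<Rightarrow> real) \<Rightarrow> real \<Rightarrow> real \<Rightarrow> real \<Rightarrow> nat \<Rightarrow> 'a set" where
  "Ev M B H \<delta> \<rho> k = (\<Union>j\<in>{..<2^k}. {\<omega>\<in>space M. \<rho> * 2 powr (- (H - \<delta>) * real (Suc k)) \<le> \<bar>delta (\<lambda>s. B s \<omega>) k j\<bar>})"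

lemma A_sets:
  assumes F: "fBm M H B" and j: "j < (2::nat)^k"
  shows "{\<omega>\<in>space M. \<rho> * 2 powr (- (H - \<delta>) * real (Suc k)) \<le> \<bar>delta (\<lambda>s. B s \<omega>) k j\<bar>} \<in> sets M"
  using delta_meas[OF F j] by measurable

lemma Ev_sets:
  assumes F: "fBm M H B"
  shows "Ev M B H \<delta> \<rho> k \<in> sets M"
  unfolding Ev_def
proof (rule sets.finite_UN)
  fix j assume "j \<in> {..<(2::nat)^k}"
  thus "{\<omega>\<in>space M. \<rho> * 2 powr (- (H - \<delta>) * real (Suc k)) \<le> \<bar>delta (\<lambda>s. B s \<omega>) k j\<bar>} \<in> sets M"
    by (intro A_sets[OF F]) simp
qed simp

lemma Ev_meas:
  assumes F: "fBm M H B" and r: "0 < \<rho>"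
  shows "emeasure M (Ev M B H \<delta> \<rho> k)
     \<le> ennreal (fact (2*p) / (2^p * fact p) / \<rho> ^ (2 * p) * (2 * 2 powr (- (2 * \<delta> * real p))) ^ Suc k)"
proof -
  define C where "C = fact (2*p) / (2^p * fact p) / \<rho> ^ (2 * p)"
  define q where "q = (2::real) powr (- (2 * \<delta> * real p))"
  have C0: "0 \<le> C" using r by (simp add: C_def)
  have q0: "0 \<le> q" by (simp add: q_def)
  have "emeasure M (Ev M B H \<delta> \<rho> k) \<le> (\<Sum>j<2^k. emeasure M {\<omega>\<in>space M. \<rho> * 2 powr (- (H - \<delta>) * real (Suc k)) \<le> \<bar>delta (\<lambda>s. B s \<omega>) k j\<bar>})"
    unfolding Ev_def
  proof (rule emeasure_subadditive_finite)
    show "(\<lambda>j. {\<omega>\<in>space M. \<rho> * 2 powr (- (H - \<delta>) * real (Suc k)) \<le> \<bar>delta (\<lambda>s. B s \<omega>) k j\<bar>}) ` {..<2^k} \<subseteq> sets M"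
      using A_sets[OF F] by blast
  qed simp
  also have "\<dots> \<le> (\<Sum>j<(2::nat)^k. ennreal (C * q ^ Suc k))"
  proof (rule sum_mono)
    fix j assume "j \<in> {..<(2::nat)^k}"
    hence "j < 2^k" by simp
    from tail_A[OF F this r, of \<delta> p]
    show "emeasure M {\<omega>\<in>space M. \<rho> * 2 powr (- (H - \<delta>) * real (Suc k)) \<le> \<bar>delta (\<lambda>s. B s \<omega>) k j\<bar>}
       \<le> ennreal (C * q ^ Suc k)" unfolding C_def q_def .
  qed
  also have "\<dots> = ennreal (\<Sum>j<(2::nat)^k. C * q ^ Suc k)"
    by (rule sum_ennreal) (use C0 q0 in simp)
  also have "(\<Sum>j<(2::nat)^k. C * q ^ Suc k) = 2^k * (C * q ^ Suc k)" by simp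
  also have "\<dots> \<le> ennreal (C * (2 * q) ^ Suc k)"
  proof (rule ennreal_leI)
    have "(2::real)^k \<le> 2 ^ Suc k" by simp
    hence "2^k * (C * q ^ Suc k) \<le> 2 ^ Suc k * (C * q ^ Suc k)"
      using C0 q0 by (intro mult_right_mono) auto
    thus "2^k * (C * q ^ Suc k) \<le> C * (2 * q) ^ Suc k" by (simp add: power_mult_distrib)
  qed
  finally show ?thesis unfolding C_def q_def .
qed


lemma ennreal_term_le_suminf: "(f::nat \<Rightarrow> ennreal) k \<le> (\<Sum>i. f i)"
  using sum_le_suminf[OF summableI, of "{k}" f] by simp

lemma inS_Ev:
  assumes w: "\<omega> \<in> space M"
    and S: "1 \<le> n" "\<rho> * 2 powr (- (H - \<delta>) * real n)
        \<le> supnorm01 (\<lambda>t. dyadic_interp n (\<lambda>s. B s \<omega>) t - dyadic_interp (n - 1) (\<lambda>s. B s \<omega>) t)"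
  shows "\<omega> \<in> Ev M B H \<delta> \<rho> (n - 1)"
proof (rule ccontr)
  assume nin: "\<omega> \<notin> Ev M B H \<delta> \<rho> (n - 1)"
  obtain k where n: "n = Suc k" using S(1) by (cases n) auto
  define f where "f = (\<lambda>s. B s \<omega>)"
  define D where "D = Max ((\<lambda>j. \<bar>delta f k j\<bar>) ` {..<2^k})"
  have z: "(0::nat) \<in> {..<2^k}" by simp
  have "D \<in> (\<lambda>j. \<bar>delta f k j\<bar>) ` {..<2^k}" unfolding D_def
  proof (rule Max_in)
    show "(\<lambda>j. \<bar>delta f k j\<bar>) ` {..<2^k} \<noteq> {}"
      using imageI[OF z, of "\<lambda>j. \<bar>delta f k j\<bar>"] by (metis empty_iff)
  qed simp
  then obtain j where j0: "j \<in> {..<2^k}" and j2: "D = \<bar>delta f k j\<bar>" by (rule imageE)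
  have j: "j < 2^k" "D = \<bar>delta f k j\<bar>" using j0 j2 by simp_all
  have memE: "\<omega> \<in> Ev M B H \<delta> \<rho> (n - 1)" if th: "\<rho> * 2 powr (- (H - \<delta>) * real n) \<le> \<bar>delta f k j\<bar>"
    unfolding Ev_def n diff_Suc_1
    by (rule UN_I[where a=j]) (use j(1) w th in \<open>simp_all add: f_def n\<close>)
  have "\<not> (\<rho> * 2 powr (- (H - \<delta>) * real n) \<le> \<bar>delta f k j\<bar>)"
    using memE nin by blast
  hence Dlt: "D < \<rho> * 2 powr (- (H - \<delta>) * real n)" using j(2) by linarith
  have "supnorm01 (\<lambda>t. dyadic_interp n f t - dyadic_interp (n - 1) f t) \<le> D"
    unfolding supnorm01_def n diff_Suc_1 D_def
    by (rule cSUP_least) (use Y_le_D in auto)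
  thus False using Dlt S(2) unfolding f_def by linarith
qed

lemma pointwise:
  assumes w: "\<omega> \<in> space M" and t: "0 < t"
  shows "exp_enat t (fbm_N B H \<delta> \<rho> \<omega>)
     \<le> 1 + (\<Sum>k. ennreal (exp (t * real (Suc k))) * indicator (Ev M B H \<delta> \<rho> k) \<omega>)"
proof -
  define S where "S = {n. n \<ge> 1 \<and>
        supnorm01 (\<lambda>t. dyadic_interp n (\<lambda>s. B s \<omega>) t - dyadic_interp (n - 1) (\<lambda>s. B s \<omega>) t)
          \<ge> \<rho> * 2 powr (- (H - \<delta>) * real n)}"
  define R where "R = (\<Sum>k. ennreal (exp (t * real (Suc k))) * indicator (Ev M B H \<delta> \<rho> k) \<omega>)"
  have N: "fbm_N B H \<delta> \<rho> \<omega> = Sup (enat ` S)" unfolding fbm_N_def S_def ..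
  have trm: "ennreal (exp (t * real n)) \<le> R" if "n \<in> S" for n
  proof -
    have n1: "1 \<le> n" and "\<omega> \<in> Ev M B H \<delta> \<rho> (n - 1)" using that inS_Ev[OF w] by (auto simp: S_def)
    hence "ennreal (exp (t * real (Suc (n - 1)))) * indicator (Ev M B H \<delta> \<rho> (n - 1)) \<omega> = ennreal (exp (t * real n))"
      by simp
    thus ?thesis unfolding R_def
      using ennreal_term_le_suminf[of "\<lambda>k. ennreal (exp (t * real (Suc k))) * indicator (Ev M B H \<delta> \<rho> k) \<omega>" "n - 1"]
      by simp
  qed
  show ?thesis
  proof (cases "S = {}")
    case True
    thus ?thesis unfolding N by (simp add: Sup_enat_def exp_enat_def zero_enat_def)
  next
    case ne: False
    show ?thesis
    proof (cases "finite S")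
      case True
      have "Max (enat ` S) = enat (Max S)"
        by (rule mono_Max_commute[symmetric]) (use True ne in \<open>auto simp: mono_def\<close>)
      hence "fbm_N B H \<delta> \<rho> \<omega> = enat (Max S)" unfolding N using True ne by (simp add: Sup_enat_def)
      moreover have "Max S \<in> S" using True ne by (rule Max_in)
      ultimately have "exp_enat t (fbm_N B H \<delta> \<rho> \<omega>) \<le> R" using trm by (simp add: exp_enat_def)
      moreover have "R \<le> 1 + R" by simp
      ultimately show ?thesis unfolding R_def by (rule order_trans)
    next
      case False
      hence "infinite (enat ` S)" by (auto dest: finite_imageD simp: inj_on_def)
      hence "fbm_N B H \<delta> \<rho> \<omega> = \<infinity>" unfolding N using ne
        by (simp add: Sup_enat_def)
      moreover have "R = \<infinity>"
      proof (rule ccontr)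
        assume "R \<noteq> \<infinity>"
        then obtain y where y: "R = ennreal y" "0 \<le> y" by (cases R rule: ennreal_cases) auto
        obtain n where n: "n \<in> S" "y / t < real n"
        proof -
          obtain m :: nat where m: "y / t < real m" using reals_Archimedean2 by blast
          from False obtain n where "n \<in> S" "m < n" using infinite_nat_iff_unbounded by blast
          thus ?thesis using that m by (meson le_less_trans less_imp_le of_nat_less_iff)
        qed
        have "y < t * real n" using n(2) t by (simp add: field_simps)
        also have "\<dots> < exp (t * real n)" using exp_gt_self by blast
        finally have "ennreal y < ennreal (exp (t * real n))" using y(2) by (simp add: ennreal_less_iff)
        thus False using trm[OF n(1)] y(1) by simp
      qed
      ultimately show ?thesis unfolding R_def by (simp add: exp_enat_def)
    qed
  qed
qed


lemma choose_p:
  assumes d: "0 < \<delta>" and t: "0 < t"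
  obtains p :: nat where "exp t * (2 * 2 powr (- (2 * \<delta> * real p))) < 1"
proof -
  obtain p :: nat where p: "(t + 4) / (2 * \<delta> * ln 2) \<le> real p" using real_arch_simple by blast
  have l2: "0 < 2 * \<delta> * ln 2" using d by simp
  hence "t + 4 \<le> real p * (2 * \<delta> * ln 2)" using p by (simp add: pos_divide_le_eq)
  hence e: "- (2 * \<delta> * real p) * ln 2 \<le> - (t + 4)" by (simp add: algebra_simps)
  have "2 powr (- (2 * \<delta> * real p)) = exp (- (2 * \<delta> * real p) * ln 2)" by (simp add: powr_def)
  also have "\<dots> \<le> exp (- (t + 4))" using e by simp
  finally have q: "2 powr (- (2 * \<delta> * real p)) \<le> exp (- (t + 4))" .
  have "exp t * (2 * 2 powr (- (2 * \<delta> * real p))) \<le> exp t * (2 * exp (- (t + 4)))"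
    using q by simp
  also have "\<dots> = 2 / exp 4"
  proof -
    have "exp t * exp (- (t + 4)) * exp 4 = 1" by (simp add: mult_exp_exp)
    thus ?thesis by (simp add: field_simps)
  qed
  also have "\<dots> < 1"
  proof -
    have "1 + 4 \<le> exp (4::real)" by (rule exp_ge_add_one_self)
    thus ?thesis by simp
  qed
  finally show ?thesis using that by blast
qed

lemma part1:
  assumes F: "fBm M H B" and d: "0 < \<delta>" and r: "0 < \<rho>" and t: "0 < t"
  shows "(\<integral>\<^sup>+ \<omega>. exp_enat t (fbm_N B H \<delta> \<rho> \<omega>) \<partial>M) < \<infinity>"
proof -
  interpret prob_space M by (rule fBm_facts(1)[OF F])
  obtain p :: nat where w1: "exp t * (2 * 2 powr (- (2 * \<delta> * real p))) < 1" using choose_p[OF d t] by blast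
  define q where "q = 2 * (2::real) powr (- (2 * \<delta> * real p))"
  define C where "C = fact (2*p) / (2^p * fact p) / \<rho> ^ (2 * p)"
  define w where "w = exp t * q"
  have w: "0 \<le> w" "w < 1" using w1 by (simp_all add: w_def q_def)
  have C0: "0 \<le> C" using r by (simp add: C_def)
  have q0: "0 \<le> q" by (simp add: q_def)
  have Em[measurable]: "\<And>k. Ev M B H \<delta> \<rho> k \<in> sets M" using Ev_sets[OF F] by blast
  define c where "c k = ennreal (exp (t * real (Suc k)))" for k
  have "(\<integral>\<^sup>+ \<omega>. exp_enat t (fbm_N B H \<delta> \<rho> \<omega>) \<partial>M)
      \<le> (\<integral>\<^sup>+ \<omega>. 1 + (\<Sum>k. c k * indicator (Ev M B H \<delta> \<rho> k) \<omega>) \<partial>M)"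
    by (rule nn_integral_mono) (use pointwise t in \<open>simp add: c_def\<close>)
  also have "\<dots> = (\<integral>\<^sup>+ \<omega>. 1 \<partial>M) + (\<integral>\<^sup>+ \<omega>. (\<Sum>k. c k * indicator (Ev M B H \<delta> \<rho> k) \<omega>) \<partial>M)"
    by (rule nn_integral_add) measurable
  also have "(\<integral>\<^sup>+ \<omega>. 1 \<partial>M) = 1" by (simp add: emeasure_space_1)
  also have "(\<integral>\<^sup>+ \<omega>. (\<Sum>k. c k * indicator (Ev M B H \<delta> \<rho> k) \<omega>) \<partial>M)
      = (\<Sum>k. (\<integral>\<^sup>+ \<omega>. c k * indicator (Ev M B H \<delta> \<rho> k) \<omega> \<partial>M))"
    by (rule nn_integral_suminf) measurable
  also have "\<dots> = (\<Sum>k. c k * emeasure M (Ev M B H \<delta> \<rho> k))"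
    by (simp add: nn_integral_cmult_indicator)
  also have "\<dots> \<le> (\<Sum>k. ennreal (C * w ^ Suc k))"
  proof (rule suminf_le)
    fix k
    have "c k * emeasure M (Ev M B H \<delta> \<rho> k) \<le> c k * ennreal (C * q ^ Suc k)"
      by (rule mult_left_mono) (use Ev_meas[OF F r, of \<delta> k p] in \<open>simp_all add: C_def q_def\<close>)
    also have "\<dots> = ennreal (exp (t * real (Suc k)) * (C * q ^ Suc k))"
      unfolding c_def by (rule ennreal_mult[symmetric]) (use C0 q0 in simp_all)
    also have "exp (t * real (Suc k)) * (C * q ^ Suc k) = C * w ^ Suc k"
    proof -
      have "exp (t * real (Suc k)) = exp t ^ Suc k"
        using exp_of_nat_mult[of "Suc k" t] by (simp add: mult.commute)
      thus ?thesis by (simp add: w_def power_mult_distrib)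
    qed
    finally show "c k * emeasure M (Ev M B H \<delta> \<rho> k) \<le> ennreal (C * w ^ Suc k)" .
  qed auto
  also have "(\<Sum>k. ennreal (C * w ^ Suc k)) = ennreal (\<Sum>k. C * w ^ Suc k)"
  proof (rule suminf_ennreal2)
    show "\<And>k. 0 \<le> C * w ^ Suc k" using C0 w by simp
    have "summable (\<lambda>k. w ^ k)" using w by (intro summable_geometric) simp
    hence "summable (\<lambda>k. (C * w) * w ^ k)" by (rule summable_mult)
    thus "summable (\<lambda>k. C * w ^ Suc k)" by (simp add: mult.assoc)
  qed
  finally have fin: "(\<integral>\<^sup>+ \<omega>. exp_enat t (fbm_N B H \<delta> \<rho> \<omega>) \<partial>M) \<le> 1 + ennreal (\<Sum>k. C * w ^ Suc k)"
    by (simp add: add_left_mono)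
  have "1 + ennreal (\<Sum>k. C * w ^ Suc k) \<noteq> \<top>" by (simp add: ennreal_add_eq_top)
  hence "1 + ennreal (\<Sum>k. C * w ^ Suc k) < \<top>" by (simp add: less_top)
  hence "(\<integral>\<^sup>+ \<omega>. exp_enat t (fbm_N B H \<delta> \<rho> \<omega>) \<partial>M) < \<top>" using fin by (rule le_less_trans[rotated])
  thus ?thesis by simp
qed

theorem theorem3:
  fixes M :: "'a measure" and B :: "real \<Rightarrow> 'a \<Rightarrow> real" and H \<delta> \<rho> :: real
  assumes "0 < H" "H < 1"
    and "fBm M H B"
    and "0 < \<delta>" "\<delta> < H"
    and "0 < \<rho>"
  shows "(\<forall>t::real. t > 0 \<longrightarrow> (\<integral>\<^sup>+ \<omega>. exp_enat t (fbm_N B H \<delta> \<rho> \<omega>) \<partial>M) < \<infinity>)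
     \<and> (\<forall>\<omega>\<in>space M. \<forall>n::nat. enat n > fbm_N B H \<delta> \<rho> \<omega> \<longrightarrow>
          supnorm01 (\<lambda>t. B t \<omega> - dyadic_interp n (\<lambda>s. B s \<omega>) t)
            \<le> \<rho> * 2 powr (- (H - \<delta>) * real (n + 1)) / (1 - 2 powr (- (H - \<delta>))))"
proof (intro conjI allI impI ballI)
  fix t :: real assume "t > 0"
  thus "(\<integral>\<^sup>+ \<omega>. exp_enat t (fbm_N B H \<delta> \<rho> \<omega>) \<partial>M) < \<infinity>"
    using part1[OF assms(3) assms(4) assms(6)] by blast
next
  fix \<omega> n assume w: "\<omega> \<in> space M" and nN: "enat n > fbm_N B H \<delta> \<rho> \<omega>"
  show "supnorm01 (\<lambda>t. B t \<omega> - dyadic_interp n (\<lambda>s. B s \<omega>) t)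
            \<le> \<rho> * 2 powr (- (H - \<delta>) * real (n + 1)) / (1 - 2 powr (- (H - \<delta>)))"
  proof (rule part2)
    show "continuous_on {0..1} (\<lambda>s. B s \<omega>)" using fBm_facts(3)[OF assms(3) w] .
    show "0 < H - \<delta>" using assms by simp
    show "0 < \<rho>" by fact
    fix m assume mn: "n < m"
    show "supnorm01 (\<lambda>t. dyadic_interp m (\<lambda>s. B s \<omega>) t - dyadic_interp (m - 1) (\<lambda>s. B s \<omega>) t)
       < \<rho> * 2 powr (- (H - \<delta>) * real m)"
    proof (rule ccontr)
      assume "\<not> ?thesis"
      hence "m \<in> {n. n \<ge> 1 \<and>
        supnorm01 (\<lambda>t. dyadic_interp n (\<lambda>s. B s \<omega>) t - dyadic_interp (n - 1) (\<lambda>s. B s \<omega>) t)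
          \<ge> \<rho> * 2 powr (- (H - \<delta>) * real n)}" using mn by simp
      hence "enat m \<le> fbm_N B H \<delta> \<rho> \<omega>" unfolding fbm_N_def by (intro Sup_upper imageI)
      thus False using nN mn by (metis enat_ord_simps(2) leD less_trans)
    qed
  qed
qed


end
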